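(* Let $(X_{a,s})_{s\ge1}$ be i.i.d. random variables with values in $[0,1]$ and mean $\mu_a$, and let $\mu_1$ satisfy $\mu_a<\mu_1<1$. For $\epsilon>0$ and an integer $n\ge3$ let \[K_n=\left\lfloor\frac{1+\epsilon}{d(\mu_a,\mu_1)}\big(\log(n)+3\log(\log(n))\big)\right\rfloor.\] Then for each $\epsilon>0$ there exist $C_2(\epsilon)>0$ and $\beta(\epsilon)>0$ (depending also on $\mu_a,\mu_1$) such that for all $n\ge3$, \[\sum_{s=K_n+1}^\infty\mathbb{P}\left(d^+(\hat\mu_{a,s},\mu_1)<\frac{d(\mu_a,\mu_1)}{1+\epsilon}\right)\le\frac{C_2(\epsilon)}{n^{\beta(\epsilon)}}.\]
   Context: $\hat\mu_{a,s}=(X_{a,1}+\dots+X_{a,s})/s$. $d(p,q)=p\log\frac pq+(1-p)\log\frac{1-p}{1-q}$ for $p,q\in[0,1]$ (conventions $0\log0=0\log(0/0)=0$, $x\log(x/0)=+\infty$ for $x>0$), and $d^+(x,y)=d(x,y)\mathbb{1}\{x<y\}$. *)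

theory Defs
  imports "HOL-Probability.Probability"
begin

definition xlogxy :: "real \<Rightarrow> real \<Rightarrow> ereal" where
  "xlogxy x y = (if x = 0 then 0 else if y = 0 then \<infinity> else ereal (x * ln (x / y)))"

definition kl :: "real \<Rightarrow> real \<Rightarrow> ereal" where
  "kl p q = xlogxy p q + xlogxy (1 - p) (1 - q)"

definition klplus :: "real \<Rightarrow> real \<Rightarrow> ereal" where
  "klplus x y = (if x < y then kl x y else 0)"

definition emp_mean :: "(nat \<Rightarrow> 'a \<Rightarrow> real) \<Rightarrow> nat \<Rightarrow> 'a \<Rightarrow> real" where
  "emp_mean X s \<omega> = (\<Sum>t=1..s. X t \<omega>) / real s"

end

theory Submission
  imports Defs "HOL-Real_Asymp.Real_Asymp"
begin

lemma fr_cont: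
  fixes m p \<eta> :: real
  assumes m: "0 < m" "m < 1" and p: "0 \<le> p" "p < 1" and eta: "\<eta> > 0"
  shows "\<exists>\<delta>>0. \<forall>x. 0 \<le> x \<longrightarrow> x < 1 \<longrightarrow> \<bar>x - p\<bar> < \<delta> \<longrightarrow>
     \<bar>(x*ln(x/m) + (1-x)*ln((1-x)/(1-m))) - (p*ln(p/m) + (1-p)*ln((1-p)/(1-m)))\<bar> < \<eta>"
proof -
  define fr where "fr = (\<lambda>x::real. x*ln(x/m) + (1-x)*ln((1-x)/(1-m)))"
  have "\<exists>\<delta>>0. \<forall>x. 0 \<le> x \<longrightarrow> x < 1 \<longrightarrow> \<bar>x - p\<bar> < \<delta> \<longrightarrow> \<bar>fr x - fr p\<bar> < \<eta>"
  proof (cases "p = 0")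
    case True
    have l1: "((\<lambda>x. x*ln(x/m)) \<longlongrightarrow> 0) (at_right 0)" using m(1) by real_asymp
    have l2: "((\<lambda>x. (1-x)*ln((1-x)/(1-m))) \<longlongrightarrow> (1-0)*ln((1-0)/(1-m))) (at_right 0)"
      using m by (intro tendsto_intros) auto
    have "(fr \<longlongrightarrow> 0 + (1-0)*ln((1-0)/(1-m))) (at_right 0)"
      unfolding fr_def by (rule tendsto_add[OF l1 l2])
    then have "(fr \<longlongrightarrow> fr 0) (at_right 0)" by (simp add: fr_def)
    then have "eventually (\<lambda>x. dist (fr x) (fr 0) < \<eta>) (at_right 0)" using eta by (rule tendstoD)
    then obtain b where b: "b > 0" "\<And>y. y > 0 \<Longrightarrow> y < b \<Longrightarrow> dist (fr y) (fr 0) < \<eta>"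
      by (auto simp: eventually_at_right_field)
    show ?thesis
    proof (intro exI[of _ b] conjI allI impI)
      fix x :: real assume "0 \<le> x" "x < 1" "\<bar>x - p\<bar> < b"
      then show "\<bar>fr x - fr p\<bar> < \<eta>"
        using b eta True by (cases "x = 0") (auto simp: dist_real_def)
    qed (use b in auto)
  next
    case False
    with p have pp: "p > 0" by auto
    have "isCont fr p" unfolding fr_def using m p pp by (intro continuous_intros) auto
    then have "eventually (\<lambda>x. dist (fr x) (fr p) < \<eta>) (at p)"
      using eta by (simp add: isCont_def tendstoD)
    then obtain d where d: "d > 0" "\<And>x. x \<noteq> p \<Longrightarrow> dist x p < d \<Longrightarrow> dist (fr x) (fr p) < \<eta>"
      by (auto simp: eventually_at)
    show ?thesis
    proof (intro exI[of _ d] conjI allI impI)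
      fix x :: real assume "0 \<le> x" "x < 1" "\<bar>x - p\<bar> < d"
      then show "\<bar>fr x - fr p\<bar> < \<eta>"
        using d eta by (cases "x = p") (auto simp: dist_real_def)
    qed (use d in auto)
  qed
  then show ?thesis unfolding fr_def .
qed

lemma ln_less_minus_one: "0 < x \<Longrightarrow> x \<noteq> 1 \<Longrightarrow> ln x < x - 1" for x :: real
  using ln_le_minus_one ln_eq_minus_one by force

lemma kl_pos:
  fixes m p :: real
  assumes "0 \<le> p" "p < m" "m < 1"
  shows "p*ln(p/m) + (1-p)*ln((1-p)/(1-m)) > 0"
proof (cases "p = 0")
  case True
  have "1/(1-m) > 1" using assms by (simp add: field_simps)
  then show ?thesis using True by (simp add: ln_gt_zero)
next
  case False
  with assms have pp: "p > 0" by auto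
  have a: "ln (m/p) < m/p - 1" using pp assms by (intro ln_less_minus_one) auto
  have b: "ln ((1-m)/(1-p)) \<le> (1-m)/(1-p) - 1" using assms by (intro ln_le_minus_one) auto
  have e1: "ln (p/m) = - ln (m/p)" using pp assms by (simp add: ln_div)
  have e2: "ln ((1-p)/(1-m)) = - ln ((1-m)/(1-p))" using pp assms by (simp add: ln_div)
  have "p * ln (m/p) < p * (m/p - 1)" using a pp by simp
  also have "\<dots> = m - p" using pp by (simp add: field_simps)
  finally have c: "p * ln (m/p) < m - p" .
  have "(1-p) * ln ((1-m)/(1-p)) \<le> (1-p) * ((1-m)/(1-p) - 1)" using b assms
    by (intro mult_left_mono) auto
  also have "\<dots> = p - m" using assms by (simp add: field_simps)
  finally have d: "(1-p) * ln ((1-m)/(1-p)) \<le> p - m" .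
  show ?thesis unfolding e1 e2 using c d by simp
qed


theorem lemma3:
  fixes M :: "'a measure" and X :: "nat \<Rightarrow> 'a \<Rightarrow> real" and \<mu>a \<mu>1 :: real
  assumes "prob_space M"
    and "\<And>s. s \<ge> 1 \<Longrightarrow> X s \<in> borel_measurable M"
    and "prob_space.indep_vars M (\<lambda>_. borel) X {1..}"
    and "\<And>s. s \<ge> 1 \<Longrightarrow> distr M borel (X s) = distr M borel (X 1)"
    and "\<And>s \<omega>. s \<ge> 1 \<Longrightarrow> \<omega> \<in> space M \<Longrightarrow> X s \<omega> \<in> {0..1}"
    and "prob_space.expectation M (X 1) = \<mu>a"
    and "\<mu>a < \<mu>1" and "\<mu>1 < 1"
  shows "\<forall>\<epsilon>>0. \<exists>C2>0. \<exists>\<beta>>0. \<forall>n::nat. n \<ge> 3 \<longrightarrow>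
    (let K = nat \<lfloor>(1 + \<epsilon>) / real_of_ereal (kl \<mu>a \<mu>1) * (ln (real n) + 3 * ln (ln (real n)))\<rfloor>
     in (\<Sum>i. emeasure M {\<omega> \<in> space M.
            klplus (emp_mean X (i + K + 1) \<omega>) \<mu>1 < kl \<mu>a \<mu>1 / ereal (1 + \<epsilon>)})
        \<le> ennreal (C2 / real n powr \<beta>))"
proof -
  interpret P: prob_space M by fact
  have meas: "\<And>s. s \<ge> 1 \<Longrightarrow> X s \<in> borel_measurable M" by fact
  have mua0: "0 \<le> \<mu>a"
  proof -
    have "0 \<le> P.expectation (X 1)"
      by (rule integral_nonneg_AE) (use assms(5) in auto)
    then show ?thesis using assms(6) by simp
  qed
  have mu1: "0 < \<mu>1" "\<mu>1 < 1" using mua0 assms(7,8) by auto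
  define fr where "fr = (\<lambda>x::real. x*ln(x/\<mu>1) + (1-x)*ln((1-x)/(1-\<mu>1)))"
  have klr: "\<And>x. 0 \<le> x \<Longrightarrow> x < 1 \<Longrightarrow> kl x \<mu>1 = ereal (fr x)"
    using mu1 by (auto simp: kl_def xlogxy_def fr_def)
  define d where "d = fr \<mu>a"
  have dpos: "d > 0" unfolding d_def fr_def using kl_pos[OF mua0 assms(7,8)] .
  have kld: "kl \<mu>a \<mu>1 = ereal d" unfolding d_def using klr mua0 assms(7,8) by simp
  show ?thesis
  proof (intro allI impI)
    fix \<epsilon> :: real assume eps: "\<epsilon> > 0"
    define \<eta> where "\<eta> = d - d/(1+\<epsilon>)"
    have eta: "\<eta> > 0" unfolding \<eta>_def using dpos eps by (simp add: field_simps)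
    obtain \<delta> where del: "\<delta> > 0" and hdel: "\<And>x. 0 \<le> x \<Longrightarrow> x < 1 \<Longrightarrow> \<bar>x - \<mu>a\<bar> < \<delta> \<Longrightarrow> \<bar>fr x - d\<bar> < \<eta>"
      using fr_cont[OF mu1 mua0 _ eta] assms(7,8) unfolding fr_def d_def by auto
    define r where "r = min \<delta> (\<mu>1 - \<mu>a) / 2"
    have r: "r > 0" "r < \<delta>" "\<mu>a + r < \<mu>1"
    proof -
      obtain m0 where m0: "m0 = min \<delta> (\<mu>1 - \<mu>a)" by simp
      have "m0 > 0" "m0 \<le> \<delta>" "m0 \<le> \<mu>1 - \<mu>a"
        using del assms(7) m0 by auto
      moreover have "r = m0 / 2" using m0 r_def by simp
      ultimately show "r > 0" "r < \<delta>" "\<mu>a + r < \<mu>1" by linarith+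
    qed
    define A where "A = (\<lambda>s. {\<omega> \<in> space M. klplus (emp_mean X s \<omega>) \<mu>1 < kl \<mu>a \<mu>1 / ereal (1 + \<epsilon>)})"
    define B where "B = (\<lambda>s. {\<omega> \<in> space M. \<bar>(\<Sum>i\<in>{1..s}. X i \<omega>) / real (card {1..s}) - \<mu>a\<bar> \<ge> r})"
    define c where "c = 2 * r^2"
    have c: "c > 0" using r by (simp add: c_def)
    have AB: "A s \<subseteq> B s" if s: "s \<ge> 1" for s
    proof
      fix \<omega> assume w: "\<omega> \<in> A s"
      then have ws: "\<omega> \<in> space M" by (simp add: A_def)
      define x where "x = emp_mean X s \<omega>"
      have x01: "0 \<le> x" "x \<le> 1"
      proof -
        have "(\<Sum>t=1..s. X t \<omega>) \<ge> 0" using assms(5) ws by (intro sum_nonneg) auto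
        moreover have "(\<Sum>t=1..s. X t \<omega>) \<le> (\<Sum>t=1..s. 1)" using assms(5) ws by (intro sum_mono) auto
        ultimately show "0 \<le> x" "x \<le> 1" using s by (auto simp: x_def emp_mean_def)
      qed
      have "\<bar>x - \<mu>a\<bar> \<ge> r"
      proof (rule ccontr)
        assume "\<not> ?thesis"
        then have xa: "\<bar>x - \<mu>a\<bar> < r" by simp
        then have xm: "x < \<mu>1" using r by auto
        then have "\<bar>fr x - d\<bar> < \<eta>" using hdel[OF x01(1)] xa r mu1 by auto
        then have "fr x > d/(1+\<epsilon>)" unfolding \<eta>_def by auto
        moreover have "klplus x \<mu>1 = ereal (fr x)" using xm klr x01 mu1 by (simp add: klplus_def)
        moreover have "kl \<mu>a \<mu>1 / ereal (1 + \<epsilon>) = ereal (d/(1+\<epsilon>))" using kld eps by simp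
        moreover have "klplus x \<mu>1 < kl \<mu>a \<mu>1 / ereal (1 + \<epsilon>)" using w by (simp add: A_def x_def)
        ultimately show False by simp
      qed
      then show "\<omega> \<in> B s" using ws s by (simp add: B_def x_def emp_mean_def)
    qed
    have Bmeas: "B s \<in> sets M" if s: "s \<ge> 1" for s
    proof -
      have g: "(\<lambda>\<omega>. \<bar>(\<Sum>i\<in>{1..s}. X i \<omega>) / real (card {1..s}) - \<mu>a\<bar>) \<in> borel_measurable M"
        using meas by (intro borel_measurable_abs borel_measurable_diff borel_measurable_divide
            borel_measurable_sum) auto
      show ?thesis unfolding B_def using g by measurable
    qed
    have hoef: "P.prob (B s) \<le> 2 * exp (- c * real s)" if s: "s \<ge> 1" for s
    proof -
      interpret H: Hoeffding_ineq_iid M "{1..s}" X "X 1" 0 1 "P.expectation (X 1)"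
      proof unfold_locales
        show "P.indep_vars (\<lambda>_. borel) X {1..s}"
          by (rule P.indep_vars_subset[OF assms(3)]) auto
        show "\<And>i. i \<in> {1..s} \<Longrightarrow> distr M borel (X i) = distr M borel (X 1)" by (rule assms(4)) simp
        show "P.random_variable borel (X 1)" using meas[of 1] by simp
        show "AE x in M. X 1 x \<in> {0..1}" by (rule AE_I2) (use assms(5) in auto)
      qed (simp_all)
      have "P.prob (B s) \<le> 2 * exp (-2 * real (card {1..s}) * r\<^sup>2 / (1 - 0)\<^sup>2)"
        unfolding B_def assms(6)[symmetric] by (rule H.Hoeffding_ineq_abs_ge') (use r s in auto)
      then show ?thesis by (simp add: c_def algebra_simps)
    qed
    have termb: "emeasure M (A s) \<le> ennreal (2 * exp (- c * real s))" if s: "s \<ge> 1" for s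
    proof -
      have "emeasure M (A s) \<le> emeasure M (B s)" using AB[OF s] Bmeas[OF s] by (rule emeasure_mono)
      also have "\<dots> = ennreal (P.prob (B s))" by (simp add: P.emeasure_eq_measure)
      also have "\<dots> \<le> ennreal (2 * exp (- c * real s))" using hoef[OF s] by (rule ennreal_leI)
      finally show ?thesis .
    qed
    define C2 where "C2 = 2 / (1 - exp (-c))"
    define \<beta> where "\<beta> = c * (1 + \<epsilon>) / d"
    have ec: "exp (-c) < 1" using c by simp
    have C2: "C2 > 0" unfolding C2_def using ec by simp
    have beta: "\<beta> > 0" unfolding \<beta>_def using c eps dpos by simp
    show "\<exists>C2>0. \<exists>\<beta>>0. \<forall>n::nat. n \<ge> 3 \<longrightarrow>
      (let K = nat \<lfloor>(1 + \<epsilon>) / real_of_ereal (kl \<mu>a \<mu>1) * (ln (real n) + 3 * ln (ln (real n)))\<rfloor>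
       in (\<Sum>i. emeasure M {\<omega> \<in> space M.
            klplus (emp_mean X (i + K + 1) \<omega>) \<mu>1 < kl \<mu>a \<mu>1 / ereal (1 + \<epsilon>)})
        \<le> ennreal (C2 / real n powr \<beta>))"
    proof (rule exI[of _ C2], rule conjI[OF C2], rule exI[of _ \<beta>], rule conjI[OF beta], intro allI impI)
      fix n :: nat assume n: "n \<ge> 3"
      define v where "v = (1 + \<epsilon>) / d * (ln (real n) + 3 * ln (ln (real n)))"
      define K where "K = nat \<lfloor>v\<rfloor>"
      have ln1: "ln (real n) \<ge> 1"
      proof -
        have "exp 1 \<le> real n" using exp_le n by linarith
        then show ?thesis using n by (simp add: ln_ge_iff)
      qed
      have lnln: "ln (ln (real n)) \<ge> 0" using ln1 by simp
      have fac: "(1 + \<epsilon>) / d > 0" using eps dpos by simp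
      have vge: "v \<ge> (1 + \<epsilon>) / d * ln (real n)" unfolding v_def
        using lnln fac by (intro mult_left_mono) auto
      have v0: "v \<ge> 0" using vge fac ln1 by (smt (verit) mult_nonneg_nonneg)
      have K1: "real (K + 1) \<ge> v" unfolding K_def using v0 by linarith
      have sumle: "(\<Sum>i. emeasure M (A (i + K + 1))) \<le> (\<Sum>i. ennreal (2 * exp (- c * real (i + K + 1))))"
        by (intro suminf_le summableI termb) simp
      have geq: "2 * exp (- c * real (i + K + 1)) = 2 * exp (- c * real (K + 1)) * exp (-c) ^ i" for i
        by (simp add: algebra_simps flip: exp_of_nat_mult exp_add)
      have sums: "(\<lambda>i. 2 * exp (- c * real (i + K + 1))) sums (2 * exp (- c * real (K + 1)) * (1 / (1 - exp (-c))))"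
        unfolding geq by (intro sums_mult geometric_sums) (use ec in auto)
      have seq: "(\<Sum>i. ennreal (2 * exp (- c * real (i + K + 1)))) = ennreal (2 * exp (- c * real (K + 1)) * (1 / (1 - exp (-c))))"
        by (rule suminf_ennreal_eq[OF _ sums]) simp
      have hh: "(1 + \<epsilon>) / d * ln (real n) \<le> real (K + 1)" using K1 vge by linarith
      have "exp (- c * real (K + 1)) \<le> exp (- c * ((1 + \<epsilon>) / d * ln (real n)))"
        using mult_left_mono[OF hh, of c] c by simp
      also have "\<dots> = exp (- (\<beta> * ln (real n)))"
        by (simp add: \<beta>_def)
      also have "\<dots> = real n powr (- \<beta>)"
        using n by (simp add: powr_def)
      also have "\<dots> = 1 / real n powr \<beta>"
        by (rule powr_minus_divide)
      finally have eb: "exp (- c * real (K + 1)) \<le> 1 / real n powr \<beta>" .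
      have fin: "2 * exp (- c * real (K + 1)) * (1 / (1 - exp (-c))) \<le> C2 / real n powr \<beta>"
      proof -
        have "2 * exp (- c * real (K + 1)) * (1 / (1 - exp (-c))) = C2 * exp (- c * real (K + 1))"
          by (simp add: C2_def)
        also have "\<dots> \<le> C2 * (1 / real n powr \<beta>)" using eb C2 by (intro mult_left_mono) auto
        finally show ?thesis by simp
      qed
      have final: "(\<Sum>i. emeasure M (A (i + K + 1))) \<le> ennreal (C2 / real n powr \<beta>)"
      proof -
        have "(\<Sum>i. emeasure M (A (i + K + 1))) \<le> ennreal (2 * exp (- c * real (K + 1)) * (1 / (1 - exp (-c))))"
          using sumle unfolding seq .
        also have "\<dots> \<le> ennreal (C2 / real n powr \<beta>)" using fin by (rule ennreal_leI)
        finally show ?thesis .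
      qed
      have "real_of_ereal (kl \<mu>a \<mu>1) = d" using kld by simp
      then have Keq: "nat \<lfloor>(1 + \<epsilon>) / real_of_ereal (kl \<mu>a \<mu>1) * (ln (real n) + 3 * ln (ln (real n)))\<rfloor> = K"
        by (simp add: K_def v_def)
      show "let K = nat \<lfloor>(1 + \<epsilon>) / real_of_ereal (kl \<mu>a \<mu>1) * (ln (real n) + 3 * ln (ln (real n)))\<rfloor>
       in (\<Sum>i. emeasure M {\<omega> \<in> space M.
            klplus (emp_mean X (i + K + 1) \<omega>) \<mu>1 < kl \<mu>a \<mu>1 / ereal (1 + \<epsilon>)})
        \<le> ennreal (C2 / real n powr \<beta>)"
        using final unfolding Keq Let_def A_def by simp
    qed
  qed
qed

end
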